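(* For every $L>\pi\sqrt2$, $a_L(L)=2\,b_L(L/2)$.
   Context: For $\alpha\in(0,1/\sqrt2)$ let $L_\alpha=\pi/\mathrm{AGM}(\alpha,\tfrac12\sqrt{1+2\alpha^2})$ (arithmetic–geometric mean); $\alpha\mapsto L_\alpha$ is a decreasing bijection from $(0,1/\sqrt2)$ onto $(\pi\sqrt2,\infty)$. For $L>\pi\sqrt2$ let $\alpha$ satisfy $L_\alpha=L$ and let $x_0>y_0>0$ satisfy $x_0^2+y_0^2=1$, $x_0y_0=\alpha^2$. Let $(x_L,y_L,z_L)(t)$ solve $x'=-xz$, $y'=yz$, $z'=x^2-y^2$ ($'=d/dt$) with initial value $(x_0,y_0,0)$, and let $a_L,b_L$ solve $a'=2x_L+az_L$, $b'=2y_L-bz_L$ with $a_L(0)=b_L(0)=0$. *)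

theory Defs
  imports "HOL-Analysis.Analysis"
begin

fun agm_iter :: "real \<Rightarrow> real \<Rightarrow> nat \<Rightarrow> real \<times> real" where
  "agm_iter a b 0 = (a, b)"
| "agm_iter a b (Suc n) =
     (let (p, q) = agm_iter a b n in ((p + q) / 2, sqrt (p * q)))"

definition AGM :: "real \<Rightarrow> real \<Rightarrow> real" where
  "AGM a b = lim (\<lambda>n. fst (agm_iter a b n))"

definition L_of :: "real \<Rightarrow> real" where
  "L_of \<alpha> = pi / AGM \<alpha> (sqrt (1 + 2 * \<alpha>\<^sup>2) / 2)"

end

theory Submission
  imports Defs
begin

lemma landen_alg:
  fixes p q C S :: real
  assumes "C^2 + S^2 = 1"
  shows "(p+q)^2 * ((C^2-S^2)*(p*C^2+q*S^2) + 2*S*C*((p-q) * S*C))^2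
       + 4*(p*q) * (2*S*C*(p*C^2+q*S^2) - (C^2-S^2)*((p-q) * S*C))^2
       = (p^2*C^2+q^2*S^2+p*q)^2"
  using assms by algebra

lemma posq:
  fixes a b C S :: real
  assumes "a > 0" "b > 0" "C^2 + S^2 = 1"
  shows "a * C^2 + b * S^2 > 0"
proof -
  have "a * C^2 + b * S^2 \<ge> min a b * (C^2 + S^2)"
    by (smt (verit) mult_right_mono zero_le_power2 distrib_left min_def)
  then show ?thesis using assms by simp
qed

lemma hderiv:
  fixes p q :: real
  assumes p: "p > 0" and q: "q > 0"
  shows "((\<lambda>t. 2*t - arctan ((p-q) * sin t * cos t / (p*(cos t)^2 + q * (sin t)^2))) has_real_derivative
     (p^2*(cos x)^2 + q^2*(sin x)^2 + p*q) / (p^2*(cos x)^2 + q^2*(sin x)^2)) (at x)"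
proof -
  define C where "C = cos x"
  define S where "S = sin x"
  have cs: "C^2 + S^2 = 1" unfolding C_def S_def by simp
  have D: "p * C^2 + q * S^2 > 0" using posq[OF p q cs] .
  have F: "p^2 * C^2 + q^2 * S^2 > 0" using posq[OF _ _ cs, of "p^2" "q^2"] p q by simp
  have DN: "(p * C^2 + q * S^2)^2 + ((p-q) * S * C)^2 = p^2 * C^2 + q^2 * S^2"
    using cs by algebra
  have dN: "((\<lambda>t. (p-q) * sin t * cos t) has_real_derivative (p-q)*(C^2 - S^2)) (at x)"
    unfolding C_def S_def by (auto intro!: derivative_eq_intros simp: power2_eq_square algebra_simps)
  have dD: "((\<lambda>t. p*(cos t)^2 + q*(sin t)^2) has_real_derivative 2*(q-p)*S*C) (at x)"
    unfolding C_def S_def by (auto intro!: derivative_eq_intros simp: power2_eq_square algebra_simps)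
  note dQ = DERIV_divide[OF dN dD, unfolded C_def[symmetric] S_def[symmetric]]
  note dA = DERIV_chain2[OF DERIV_arctan dQ[OF D[THEN less_imp_neq, symmetric]]]
  have d2: "((\<lambda>t. 2*t) has_real_derivative 2) (at x)" by (auto intro!: derivative_eq_intros)
  note dH = DERIV_diff[OF d2 dA]
  have eq: "2 - inverse (1 + ((p - q) * S * C / (p * C\<^sup>2 + q * S\<^sup>2))\<^sup>2) *
    (((p - q) * (C\<^sup>2 - S\<^sup>2) * (p * C\<^sup>2 + q * S\<^sup>2) - (p - q) * S * C * (2 * (q - p) * S * C)) /
     ((p * C\<^sup>2 + q * S\<^sup>2) * (p * C\<^sup>2 + q * S\<^sup>2))) =
    (p\<^sup>2 * C\<^sup>2 + q\<^sup>2 * S\<^sup>2 + p * q) / (p\<^sup>2 * C\<^sup>2 + q\<^sup>2 * S\<^sup>2)"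
  proof -
    have e1: "inverse (1 + ((p - q) * S * C / (p * C\<^sup>2 + q * S\<^sup>2))\<^sup>2) = (p * C^2 + q * S^2)^2 / (p^2 * C^2 + q^2 * S^2)"
      using D DN by (simp add: field_simps)
    have e2: "(p - q) * (C\<^sup>2 - S\<^sup>2) * (p * C\<^sup>2 + q * S\<^sup>2) - (p - q) * S * C * (2 * (q - p) * S * C)
       = (p-q)*(p*C^2 - q*S^2)" using cs by algebra
    have e3: "(p\<^sup>2 * C\<^sup>2 + q\<^sup>2 * S\<^sup>2) * 2 - (p-q)*(p*C^2 - q*S^2) = p\<^sup>2 * C\<^sup>2 + q\<^sup>2 * S\<^sup>2 + p * q"
      using cs by algebra
    have ab: "\<And>Dv F2 X Y::real. Dv>0 \<Longrightarrow> F2>0 \<Longrightarrow> F2*2 - X = Y \<Longrightarrow> 2 - Dv^2/F2 * (X/(Dv*Dv)) = Y/F2"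
      by (simp add: field_simps power2_eq_square)
    show ?thesis unfolding e1 e2 by (rule ab[OF D F e3])
  qed
  show ?thesis
    apply (rule DERIV_cong[OF dH])
    unfolding C_def[symmetric] S_def[symmetric] using eq by simp
qed

definition FF :: "real \<Rightarrow> real \<Rightarrow> real \<Rightarrow> real" where
  "FF p q t = sqrt (p^2 * (cos t)^2 + q^2 * (sin t)^2)"

definition hh :: "real \<Rightarrow> real \<Rightarrow> real \<Rightarrow> real" where
  "hh p q t = 2*t - arctan ((p-q) * sin t * cos t / (p*(cos t)^2 + q * (sin t)^2))"

lemma FF_pos: assumes "p > 0" "q > 0" shows "FF p q t > 0"
  using posq[of "p^2" "q^2" "cos t" "sin t"] assms unfolding FF_def by simp

lemma FF_sq: "(FF p q t)^2 = p^2 * (cos t)^2 + q^2 * (sin t)^2"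
  unfolding FF_def by (simp add: add_nonneg_nonneg)

lemma hh_FF:
  fixes p q :: real
  assumes p: "p > 0" and q: "q > 0"
  shows "FF ((p+q)/2) (sqrt (p*q)) (hh p q t) = (p^2*(cos t)^2 + q^2*(sin t)^2 + p*q) / (2 * FF p q t)"
proof -
  define C where "C = cos t"
  define S where "S = sin t"
  define Dv where "Dv = p * C^2 + q * S^2"
  define Nv where "Nv = (p-q) * S * C"
  define Fv where "Fv = FF p q t"
  have cs: "C^2 + S^2 = 1" unfolding C_def S_def by simp
  have D: "Dv > 0" using posq[OF p q cs] unfolding Dv_def .
  have Fp: "Fv > 0" unfolding Fv_def using FF_pos[OF p q] .
  have F2: "Fv^2 = p^2 * C^2 + q^2 * S^2" unfolding Fv_def C_def S_def FF_sq ..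
  have DN: "Dv^2 + Nv^2 = Fv^2" unfolding F2 Dv_def Nv_def
    using cs by algebra
  have sq: "sqrt (1 + (Nv/Dv)^2) = Fv / Dv"
  proof -
    have "1 + (Nv/Dv)^2 = (Fv/Dv)^2" using D DN by (simp add: field_simps)
    then show ?thesis using D Fp by simp
  qed
  have ca: "cos (arctan (Nv/Dv)) = Dv / Fv" unfolding cos_arctan sq using D by simp
  have sa: "sin (arctan (Nv/Dv)) = Nv / Fv" unfolding sin_arctan sq using D by simp
  have hdef: "hh p q t = 2*t - arctan (Nv/Dv)" unfolding hh_def Nv_def Dv_def C_def S_def by simp
  have ch: "cos (hh p q t) = ((C^2-S^2)*Dv + 2*S*C*Nv)/Fv"
    unfolding hdef cos_diff ca sa cos_double sin_double C_def S_def
    using Fp by (simp add: field_simps)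
  have sh: "sin (hh p q t) = (2*S*C*Dv - (C^2-S^2)*Nv)/Fv"
    unfolding hdef sin_diff ca sa cos_double sin_double C_def S_def
    using Fp by (simp add: field_simps)
  define P where "P = p^2*C^2 + q^2*S^2 + p*q"
  have Ppos: "P > 0" unfolding P_def using F2 Fp p q
    by (smt (verit) mult_pos_pos zero_less_power)
  have "(FF ((p+q)/2) (sqrt (p*q)) (hh p q t))^2 = ((p+q)^2 * ((C^2-S^2)*Dv + 2*S*C*Nv)^2
       + 4*(p*q) * (2*S*C*Dv - (C^2-S^2)*Nv)^2) / (4 * Fv^2)"
    unfolding FF_sq ch sh using p q Fp by (simp add: field_simps power2_eq_square)
  also have "\<dots> = (P / (2 * Fv))^2"
    unfolding Dv_def Nv_def landen_alg[OF cs] P_def by (simp add: power2_eq_square)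
  finally have "(FF ((p+q)/2) (sqrt (p*q)) (hh p q t))^2 = (P / (2 * Fv))^2" .
  moreover have "FF ((p+q)/2) (sqrt (p*q)) (hh p q t) \<ge> 0" unfolding FF_def by simp
  moreover have "P / (2 * Fv) > 0" using Ppos Fp by simp
  ultimately have "FF ((p+q)/2) (sqrt (p*q)) (hh p q t) = P / (2 * Fv)"
    using power2_eq_imp_eq by (metis less_eq_real_def)
  then show ?thesis unfolding P_def Fv_def C_def S_def .
qed

lemma antideriv_exists:
  fixes f :: "real \<Rightarrow> real"
  assumes cf: "continuous_on UNIV f"
  shows "\<exists>G. G 0 = 0 \<and> (\<forall>x. (G has_real_derivative f x) (at x))"
proof -
  define G where "G x = integral {0..x} f - integral {x..0} f" for x
  have "(G has_real_derivative f x) (at x)" for x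
  proof -
    define K where "K = \<bar>x\<bar> + 1"
    have cK: "continuous_on {-K..K} f" using cf continuous_on_subset by blast
    have xin: "x \<in> {-K<..<K}" unfolding K_def by auto
    have d1: "((\<lambda>u. integral {-K..u} f) has_real_derivative f x) (at x within {-K..K})"
      by (rule integral_has_real_derivative[OF cK]) (use xin in auto)
    have "((\<lambda>u. integral {-K..u} f) has_real_derivative f x) (at x within {-K<..<K})"
      by (rule has_field_derivative_subset[OF d1]) auto
    then have d2: "((\<lambda>u. integral {-K..u} f - integral {-K..0} f) has_real_derivative f x) (at x)"
      using xin at_within_open[of x "{-K<..<K}"] by (auto intro!: derivative_eq_intros)
    have int: "f integrable_on {-K..K}" using cK integrable_continuous_real by blast
    show ?thesis
    proof (rule has_field_derivative_transform_within_open[OF d2 _ xin])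
      fix u assume u: "u \<in> {-K<..<K}"
      have K0: "0 < K" unfolding K_def by auto
      show "integral {-K..u} f - integral {-K..0} f = G u"
      proof (cases "0 \<le> u")
        case True
        have "integral {-K..0} f + integral {0..u} f = integral {-K..u} f"
          by (rule Henstock_Kurzweil_Integration.integral_combine) (use True u K0 integrable_subinterval_real[OF int] in auto)
        moreover have "integral {u..0} f = 0" using True
          by (cases "u = 0") auto
        ultimately show ?thesis unfolding G_def by simp
      next
        case False
        have "integral {-K..u} f + integral {u..0} f = integral {-K..0} f"
          by (rule Henstock_Kurzweil_Integration.integral_combine) (use False u K0 integrable_subinterval_real[OF int] in auto)
        moreover have "integral {0..u} f = 0" using False by auto
        ultimately show ?thesis unfolding G_def by simp
      qed
    qed auto
  qed
  moreover have "G 0 = 0" unfolding G_def by simp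
  ultimately show ?thesis by blast
qed

lemma deriv_const_diff:
  fixes f g d :: "real \<Rightarrow> real"
  assumes "\<And>x. (f has_real_derivative d x) (at x)" "\<And>x. (g has_real_derivative d x) (at x)"
  shows "f x - g x = f y - g y"
proof -
  have "\<forall>x. ((\<lambda>x. f x - g x) has_real_derivative 0) (at x)"
    using DERIV_diff[OF assms(1) assms(2)] by simp
  then show ?thesis using DERIV_isconst_all by blast
qed

definition GG :: "real \<Rightarrow> real \<Rightarrow> real \<Rightarrow> real" where
  "GG p q = (SOME G. G 0 = 0 \<and> (\<forall>x. (G has_real_derivative 1 / FF p q x) (at x)))"

lemma GG:
  assumes p: "p > 0" and q: "q > 0"
  shows "GG p q 0 = 0" "\<And>x. (GG p q has_real_derivative 1 / FF p q x) (at x)"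
proof -
  have nz: "p^2 * (cos x)^2 + q^2 * (sin x)^2 \<noteq> 0" for x
    using posq[of "p^2" "q^2" "cos x" "sin x"] p q by simp
  have "continuous_on UNIV (\<lambda>x. 1 / FF p q x)"
    unfolding FF_def using nz
    by (intro continuous_intros) auto
  from antideriv_exists[OF this]
  have "\<exists>G. G 0 = 0 \<and> (\<forall>x. (G has_real_derivative 1 / FF p q x) (at x))" .
  from someI_ex[OF this] show "GG p q 0 = 0" "\<And>x. (GG p q has_real_derivative 1 / FF p q x) (at x)"
    unfolding GG_def by auto
qed

lemma FF_shift: "FF p q (t + pi) = FF p q t"
  unfolding FF_def by simp

lemma GG_shift:
  assumes p: "p > 0" and q: "q > 0"
  shows "GG p q (t + pi) = GG p q t + GG p q pi"
proof -
  have d1: "((\<lambda>t. GG p q (t + pi)) has_real_derivative 1 / FF p q t) (at t)" for t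
  proof -
    have "((\<lambda>t. t + pi) has_real_derivative 1) (at t)" by (auto intro!: derivative_eq_intros)
    from DERIV_chain2[OF GG(2)[OF p q, of "t + pi"] this] show ?thesis by (simp add: FF_shift)
  qed
  have "GG p q (t + pi) - GG p q t = GG p q (0 + pi) - GG p q 0"
    by (rule deriv_const_diff[OF d1 GG(2)[OF p q]])
  then show ?thesis using GG(1)[OF p q] by simp
qed

lemma GG_4pi:
  assumes p: "p > 0" and q: "q > 0"
  shows "GG p q (4*pi) = 2 * GG p q (2*pi)" "GG p q (2*pi) = 2 * GG p q pi"
proof -
  have a: "GG p q (2*pi) = 2 * GG p q pi" using GG_shift[OF p q, of pi] by simp
  have b: "GG p q (3*pi) = GG p q (2*pi) + GG p q pi" using GG_shift[OF p q, of "2*pi"] by simp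
  have c: "GG p q (4*pi) = GG p q (3*pi) + GG p q pi" using GG_shift[OF p q, of "3*pi"] by simp
  show "GG p q (4*pi) = 2 * GG p q (2*pi)" "GG p q (2*pi) = 2 * GG p q pi" using a b c by simp_all
qed

lemma landen:
  assumes p: "p > 0" and q: "q > 0"
  shows "GG ((p+q)/2) (sqrt (p*q)) (2*pi) = GG p q (2*pi)"
proof -
  define p1 where "p1 = (p+q)/2"
  define q1 where "q1 = sqrt (p*q)"
  have p1: "p1 > 0" unfolding p1_def using p q by simp
  have q1: "q1 > 0" unfolding q1_def using p q by simp
  have d: "((\<lambda>t. GG p1 q1 (hh p q t)) has_real_derivative 2 / FF p q t) (at t)" for t
  proof -
    have h: "(hh p q has_real_derivative
       (p^2*(cos t)^2 + q^2*(sin t)^2 + p*q) / (p^2*(cos t)^2 + q^2*(sin t)^2)) (at t)"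
      using hderiv[OF p q, of t] unfolding hh_def[abs_def] .
    note c = DERIV_chain2[OF GG(2)[OF p1 q1, of "hh p q t"] h]
    have P: "p^2*(cos t)^2 + q^2*(sin t)^2 + p*q > 0"
      using posq[of "p^2" "q^2" "cos t" "sin t"] p q by (simp add: add_pos_pos)
    have F: "FF p q t > 0" using FF_pos[OF p q] .
    have ab: "\<And>P F::real. P > 0 \<Longrightarrow> F > 0 \<Longrightarrow> 1 / (P / (2 * F)) * (P / F^2) = 2 / F"
      by (simp add: field_simps power2_eq_square)
    show ?thesis
      apply (rule DERIV_cong[OF c])
      unfolding p1_def q1_def hh_FF[OF p q] FF_sq[symmetric]
      by (rule ab) (use P F in \<open>simp_all add: FF_sq\<close>)
  qed
  have d2: "((\<lambda>t. 2 * GG p q t) has_real_derivative 2 / FF p q t) (at t)" for t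
    using DERIV_cmult[OF GG(2)[OF p q, of t], of 2] by simp
  have "GG p1 q1 (hh p q (2*pi)) - 2 * GG p q (2*pi) = GG p1 q1 (hh p q 0) - 2 * GG p q 0"
    by (rule deriv_const_diff[OF d d2])
  moreover have "hh p q (2*pi) = 4*pi" "hh p q 0 = 0" unfolding hh_def by simp_all
  ultimately have "GG p1 q1 (4*pi) = 2 * GG p q (2*pi)" using GG(1)[OF p1 q1] GG(1)[OF p q] by simp
  then show ?thesis using GG_4pi[OF p1 q1] unfolding p1_def q1_def by simp
qed

lemma GG_bounds:
  assumes p: "p > 0" and q: "q > 0"
  shows "2*pi / max p q \<le> GG p q (2*pi)" "GG p q (2*pi) \<le> 2*pi / min p q"
proof -
  define M where "M = max p q"
  define m where "m = min p q"
  have M: "M > 0" "p^2 \<le> M^2" "q^2 \<le> M^2" unfolding M_def using p q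
    by (auto intro!: power_mono)
  have m: "m > 0" "m^2 \<le> p^2" "m^2 \<le> q^2" unfolding m_def using p q
    by (auto intro!: power_mono)
  have Fle: "FF p q t \<le> M" for t
  proof -
    have "p^2 * (cos t)^2 \<le> M^2 * (cos t)^2" by (rule mult_right_mono) (use M in auto)
    moreover have "q^2 * (sin t)^2 \<le> M^2 * (sin t)^2" by (rule mult_right_mono) (use M in auto)
    ultimately have "(FF p q t)^2 \<le> M^2 * ((cos t)^2 + (sin t)^2)"
      unfolding FF_sq distrib_left by linarith
    then have "(FF p q t)^2 \<le> M^2" by simp
    then show ?thesis by (rule power2_le_imp_le) (use M in auto)
  qed
  have Fge: "m \<le> FF p q t" for t
  proof -
    have "m^2 * (cos t)^2 \<le> p^2 * (cos t)^2" by (rule mult_right_mono) (use m in auto)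
    moreover have "m^2 * (sin t)^2 \<le> q^2 * (sin t)^2" by (rule mult_right_mono) (use m in auto)
    ultimately have "m^2 * ((cos t)^2 + (sin t)^2) \<le> (FF p q t)^2"
      unfolding FF_sq distrib_left by linarith
    then have "m^2 \<le> (FF p q t)^2" by simp
    then show ?thesis by (rule power2_le_imp_le) (use FF_pos[OF p q, of t] in auto)
  qed
  have "(\<lambda>t. GG p q t - t / M) 0 \<le> (\<lambda>t. GG p q t - t / M) (2*pi)"
  proof (rule DERIV_nonneg_imp_nondecreasing[where f="\<lambda>t. GG p q t - t / M"])
    fix t
    have dvM: "((\<lambda>t. t / M) has_real_derivative 1 / M) (at t)" using M by (auto intro!: derivative_eq_intros)
    have "1 / M \<le> 1 / FF p q t" using Fle[of t] FF_pos[OF p q, of t]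
      by (simp add: frac_le)
    moreover have "((\<lambda>t. GG p q t - t / M) has_real_derivative (1 / FF p q t - 1 / M)) (at t)"
      using DERIV_diff[OF GG(2)[OF p q, of t] dvM] by simp
    ultimately show "\<exists>y. ((\<lambda>t. GG p q t - t / M) has_real_derivative y) (at t) \<and> 0 \<le> y"
      by force
  qed simp
  then show "2*pi / max p q \<le> GG p q (2*pi)" using GG(1)[OF p q] unfolding M_def by simp
  have "(\<lambda>t. t / m - GG p q t) 0 \<le> (\<lambda>t. t / m - GG p q t) (2*pi)"
  proof (rule DERIV_nonneg_imp_nondecreasing[where f="\<lambda>t. t / m - GG p q t"])
    fix t
    have dvm: "((\<lambda>t. t / m) has_real_derivative 1 / m) (at t)" using m by (auto intro!: derivative_eq_intros)
    have "1 / FF p q t \<le> 1 / m" using Fge[of t] m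
      by (simp add: frac_le)
    moreover have "((\<lambda>t. t / m - GG p q t) has_real_derivative (1 / m - 1 / FF p q t)) (at t)"
      using DERIV_diff[OF dvm GG(2)[OF p q, of t]] by simp
    ultimately show "\<exists>y. ((\<lambda>t. t / m - GG p q t) has_real_derivative y) (at t) \<and> 0 \<le> y"
      by force
  qed simp
  then show "GG p q (2*pi) \<le> 2*pi / min p q" using GG(1)[OF p q] unfolding m_def by simp
qed


lemma agm_pos:
  assumes "a > 0" "b > 0"
  shows "fst (agm_iter a b n) > 0 \<and> snd (agm_iter a b n) > 0"
  using assms by (induction n) (auto simp: split_beta)

lemma agm_step_gap:
  fixes p q :: real
  assumes "p > 0" "q > 0"
  shows "\<bar>(p+q)/2 - sqrt (p*q)\<bar> \<le> \<bar>p - q\<bar> / 2"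
proof -
  define u where "u = sqrt p"
  define v where "v = sqrt q"
  have u: "u \<ge> 0" "p = u^2" and v: "v \<ge> 0" "q = v^2"
    unfolding u_def v_def using assms by auto
  have s: "sqrt (p*q) = u * v" unfolding u_def v_def by (simp add: real_sqrt_mult)
  have uv: "\<bar>u - v\<bar> \<le> u + v" using u v by linarith
  have "(u - v)^2 = \<bar>u - v\<bar> * \<bar>u - v\<bar>" by (simp add: power2_eq_square)
  also have "\<dots> \<le> \<bar>u - v\<bar> * (u + v)" by (rule mult_left_mono[OF uv]) simp
  finally have "(u - v)^2 \<le> \<bar>u - v\<bar> * (u + v)" .
  also have "\<dots> = \<bar>(u - v) * (u + v)\<bar>" using u v by (simp add: abs_mult)
  also have "(u - v) * (u + v) = u^2 - v^2" by (simp add: power2_eq_square algebra_simps)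
  finally have "(u - v)^2 \<le> \<bar>u^2 - v^2\<bar>" .
  moreover have e: "(p+q)/2 - sqrt (p*q) = (u-v)^2/2" unfolding s using u v
    by (simp add: power2_eq_square field_simps)
  ultimately show ?thesis unfolding e using u v by simp
qed

lemma agm_gap:
  assumes "a > 0" "b > 0"
  shows "\<bar>fst (agm_iter a b n) - snd (agm_iter a b n)\<bar> \<le> \<bar>a - b\<bar> / 2^n"
proof (induction n)
  case 0
  then show ?case by simp
next
  case (Suc n)
  have pos: "fst (agm_iter a b n) > 0" "snd (agm_iter a b n) > 0" using agm_pos[OF assms] by auto
  have "\<bar>fst (agm_iter a b (Suc n)) - snd (agm_iter a b (Suc n))\<bar>
      \<le> \<bar>fst (agm_iter a b n) - snd (agm_iter a b n)\<bar> / 2"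
    using agm_step_gap[OF pos] by (simp add: split_beta)
  also have "\<dots> \<le> \<bar>a - b\<bar> / 2^n / 2" using Suc by simp
  finally show ?case by simp
qed

lemma agm_scale:
  "agm_iter (2*a) (2*b) n = (2 * fst (agm_iter a b n), 2 * snd (agm_iter a b n))"
proof (induction n)
  case 0 then show ?case by simp
next
  case (Suc n)
  have "sqrt (2 * fst (agm_iter a b n) * (2 * snd (agm_iter a b n))) = 2 * sqrt (fst (agm_iter a b n) * snd (agm_iter a b n))"
    by (simp add: real_sqrt_mult)
  then show ?case using Suc by (simp add: split_beta algebra_simps)
qed

lemma GG_agm_iter:
  assumes "p > 0" "q > 0"
  shows "GG (fst (agm_iter p q n)) (snd (agm_iter p q n)) (2*pi) = GG p q (2*pi)"
proof (induction n)
  case 0 then show ?case by simp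
next
  case (Suc n)
  have pos: "fst (agm_iter p q n) > 0" "snd (agm_iter p q n) > 0" using agm_pos[OF assms] by auto
  show ?case using landen[OF pos] Suc by (simp add: split_beta)
qed

lemma GG_AGM:
  fixes a b :: real
  assumes a: "a > 0" and b: "b > 0"
  shows "GG (2*a) (2*b) (2*pi) = pi / AGM a b"
proof -
  define P where "P = GG (2*a) (2*b) (2*pi)"
  define an where "an n = fst (agm_iter a b n)" for n
  define bn where "bn n = snd (agm_iter a b n)" for n
  have pos: "an n > 0" "bn n > 0" for n using agm_pos[OF a b] unfolding an_def bn_def by auto
  have Pn: "P = GG (2 * an n) (2 * bn n) (2*pi)" for n
    using GG_agm_iter[of "2*a" "2*b" n] a b unfolding P_def an_def bn_def agm_scale by simp
  have Ppos: "P > 0"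
  proof -
    have "2*pi / max (2*a) (2*b) \<le> P" unfolding P_def using GG_bounds a b by simp
    moreover have "2*pi / max (2*a) (2*b) > 0" using a b by simp
    ultimately show ?thesis by linarith
  qed
  define c where "c = pi / P"
  have close: "\<bar>an n - c\<bar> \<le> \<bar>a - b\<bar> / 2^n" for n
  proof -
    have p2: "2 * an n > 0" "2 * bn n > 0" using pos[of n] by auto
    have l: "2*pi / max (2 * an n) (2 * bn n) \<le> P" and u: "P \<le> 2*pi / min (2 * an n) (2 * bn n)"
      using GG_bounds[OF p2] Pn[of n] by auto
    have l': "pi / max (an n) (bn n) \<le> P" using l by (simp add: max_mult_distrib_left[symmetric])
    have u': "P \<le> pi / min (an n) (bn n)" using u by (simp add: min_mult_distrib_left[symmetric])
    have "c \<le> max (an n) (bn n)"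
      using l' Ppos pos[of n] unfolding c_def by (simp add: field_simps)
    moreover have "min (an n) (bn n) \<le> c"
      using u' Ppos pos[of n] unfolding c_def by (simp add: field_simps)
    ultimately have "\<bar>an n - c\<bar> \<le> \<bar>an n - bn n\<bar>" by linarith
    also have "\<dots> \<le> \<bar>a - b\<bar> / 2^n" using agm_gap[OF a b] unfolding an_def bn_def by blast
    finally show ?thesis .
  qed
  have "(\<lambda>n. an n - c) \<longlonglongrightarrow> 0"
  proof (rule Lim_null_comparison)
    show "\<forall>\<^sub>F n in sequentially. norm (an n - c) \<le> \<bar>a - b\<bar> / 2^n" using close by simp
    show "(\<lambda>n. \<bar>a - b\<bar> / 2^n) \<longlonglongrightarrow> 0" by (rule LIMSEQ_divide_realpow_zero) simp
  qed
  then have "an \<longlonglongrightarrow> c" using tendsto_add[OF _ tendsto_const[of c]] by fastforce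
  then have "AGM a b = c" unfolding AGM_def an_def[abs_def] by (rule limI)
  then show ?thesis unfolding c_def P_def using Ppos by simp
qed

lemma GG_sym:
  assumes "p > 0" "q > 0"
  shows "GG p q (2*pi) = GG q p (2*pi)"
  using landen[OF assms] landen[OF assms(2,1)] by (simp add: add.commute mult.commute)


theorem lemma5p2:
  fixes L \<alpha> x0 y0 :: real
    and x y z a b :: "real \<Rightarrow> real"
  assumes "L > pi * sqrt 2"
    and "0 < \<alpha>" "\<alpha> < 1 / sqrt 2" "L_of \<alpha> = L"
    and "x0 > y0" "y0 > 0" "x0\<^sup>2 + y0\<^sup>2 = 1" "x0 * y0 = \<alpha>\<^sup>2"
    and "\<And>t. (x has_real_derivative (- (x t * z t))) (at t)"
    and "\<And>t. (y has_real_derivative (y t * z t)) (at t)"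
    and "\<And>t. (z has_real_derivative ((x t)\<^sup>2 - (y t)\<^sup>2)) (at t)"
    and "x 0 = x0" "y 0 = y0" "z 0 = 0"
    and "\<And>t. (a has_real_derivative (2 * x t + a t * z t)) (at t)"
    and "\<And>t. (b has_real_derivative (2 * y t - b t * z t)) (at t)"
    and "a 0 = 0" "b 0 = 0"
  shows "a L = 2 * b (L / 2)"
proof -
  note dx = assms(9) and dy = assms(10) and dz = assms(11) and da = assms(15) and db = assms(16)
  have al: "\<alpha> > 0" using assms(2) .
  have x0p: "x0 > 0" using assms(5,6) by linarith
  have xy: "x t * y t = \<alpha>^2" for t
  proof -
    have "\<forall>t. ((\<lambda>t. x t * y t) has_real_derivative 0) (at t)"
      by (intro allI, rule DERIV_cong[OF DERIV_mult[OF dx dy]]) (simp add: algebra_simps)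
    then have "x t * y t = x 0 * y 0" by (rule DERIV_isconst_all)
    then show ?thesis using assms(8,12,13) by simp
  qed
  have sph: "(x t)^2 + (y t)^2 + (z t)^2 = 1" for t
  proof -
    have "\<forall>t. ((\<lambda>t. x t * x t + y t * y t + z t * z t) has_real_derivative 0) (at t)"
      by (intro allI, rule DERIV_cong[OF DERIV_add[OF DERIV_add[OF DERIV_mult[OF dx dx] DERIV_mult[OF dy dy]] DERIV_mult[OF dz dz]]])
        (simp add: algebra_simps power2_eq_square)
    then have "x t * x t + y t * y t + z t * z t = x 0 * x 0 + y 0 * y 0 + z 0 * z 0" by (rule DERIV_isconst_all)
    then show ?thesis using assms(7,12,13,14) by (simp add: power2_eq_square)
  qed
  define R where "R = x0 + y0"
  define r where "r = x0 - y0"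
  have Rp: "R > 0" and rp: "r > 0" unfolding R_def r_def using assms(5,6) by auto
  have R2: "R^2 = 1 + 2*\<alpha>^2" unfolding R_def using assms(7,8) by (simp add: power2_eq_square algebra_simps)
  have r2: "r^2 = 1 - 2*\<alpha>^2" unfolding r_def using assms(7,8) by (simp add: power2_eq_square algebra_simps)
  have Rsq: "R = sqrt (1 + 2*\<alpha>^2)" using R2 Rp by (metis abs_of_pos real_sqrt_abs)
  have a2p: "2*\<alpha> > 0" using al by simp
  have contx: "continuous_on UNIV (\<lambda>t. x t + y t)"
    by (rule continuous_at_imp_continuous_on)
       (auto intro!: continuous_intros DERIV_continuous[OF dx] DERIV_continuous[OF dy])
  obtain \<psi> where \<psi>0: "\<psi> 0 = 0" and d\<psi>: "\<And>t. (\<psi> has_real_derivative x t + y t) (at t)"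
    using antideriv_exists[OF contx] by blast
  have E: "x t - y t = r * cos (\<psi> t) \<and> z t = r * sin (\<psi> t)" for t
  proof -
    have "\<forall>t. ((\<lambda>t. (x t - y t - r * cos (\<psi> t))^2 + (z t - r * sin (\<psi> t))^2) has_real_derivative 0) (at t)"
      apply (intro allI)
      apply (rule DERIV_cong)
       apply (rule derivative_eq_intros dx dy dz d\<psi> refl)+
      apply (simp add: algebra_simps power2_eq_square)
      done
    then have "(x t - y t - r * cos (\<psi> t))^2 + (z t - r * sin (\<psi> t))^2
        = (x 0 - y 0 - r * cos (\<psi> 0))^2 + (z 0 - r * sin (\<psi> 0))^2" by (rule DERIV_isconst_all)
    also have "\<dots> = 0" using assms(12,13,14) \<psi>0 unfolding r_def by simp
    finally show ?thesis by (simp add: add_nonneg_eq_0_iff)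
  qed
  define F where "F = FF R (2*\<alpha>)"
  have Fp: "F u > 0" for u unfolding F_def using FF_pos[OF Rp a2p] .
  have s2: "(x t + y t)^2 = (F (\<psi> t))^2" for t
  proof -
    have "(x t + y t)^2 = (x t)^2 + (y t)^2 + 2 * (x t * y t)" by (simp add: power2_eq_square algebra_simps)
    also have "\<dots> = 1 - (z t)^2 + 2 * \<alpha>^2" using sph[of t] xy[of t] by simp
    also have "\<dots> = 1 - r^2 * (sin (\<psi> t))^2 + 2 * \<alpha>^2" using E[of t] by (simp add: power_mult_distrib)
    also have "\<dots> = R^2 * (cos (\<psi> t))^2 + (2*\<alpha>)^2 * (sin (\<psi> t))^2"
    proof -
      have cs: "(cos (\<psi> t))^2 + (sin (\<psi> t))^2 = 1" by simp
      show ?thesis unfolding R2 r2 using cs by algebra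
    qed
    also have "\<dots> = (F (\<psi> t))^2" unfolding F_def FF_sq ..
    finally show ?thesis .
  qed
  have snz: "x t + y t \<noteq> 0" for t
    using s2[of t] Fp[of "\<psi> t"] by auto
  have spos: "x t + y t > 0" for t
  proof (rule ccontr)
    assume "\<not> x t + y t > 0"
    then have le: "x t + y t \<le> 0" by simp
    have s0: "x 0 + y 0 > 0" using assms(12,13) x0p assms(6) by simp
    have cs: "continuous_on S (\<lambda>t. x t + y t)" for S using contx continuous_on_subset by blast
    obtain u where "x u + y u = 0"
    proof (cases "0 \<le> t")
      case True
      from IVT2'[of "\<lambda>t. x t + y t" t 0 0, OF le _ True cs] s0 that show ?thesis by force
    next
      case False
      from IVT'[of "\<lambda>t. x t + y t" t 0 0, OF le _ _ cs] s0 that False show ?thesis by force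
    qed
    then show False using snz by blast
  qed
  have sF: "x t + y t = F (\<psi> t)" for t
    using s2[of t] spos[of t] Fp[of "\<psi> t"] by (simp add: power2_eq_iff_nonneg)
  define G where "G = GG R (2*\<alpha>)"
  have dG: "(G has_real_derivative 1 / F u) (at u)" for u unfolding G_def F_def using GG(2)[OF Rp a2p] .
  have G0: "G 0 = 0" unfolding G_def using GG(1)[OF Rp a2p] .
  have G\<psi>: "G (\<psi> t) = t" for t
  proof -
    have d1: "((\<lambda>t. G (\<psi> t)) has_real_derivative 1) (at t)" for t
      using DERIV_chain2[OF dG d\<psi>[of t]] sF[of t] Fp[of "\<psi> t"] by simp
    have d2: "((\<lambda>t. t) has_real_derivative 1) (at t)" for t by (rule DERIV_ident)
    have "G (\<psi> t) - t = G (\<psi> 0) - 0" using deriv_const_diff[OF d1 d2] by blast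
    then show ?thesis using \<psi>0 G0 by simp
  qed
  have Gmono: "G u < G v" if "u < v" for u v
    using DERIV_pos_imp_increasing[OF that] dG Fp by (metis zero_less_divide_1_iff)
  have Ginj: "u = v" if "G u = G v" for u v
    using Gmono[of u v] Gmono[of v u] that by (cases u v rule: linorder_cases) auto
  have GL: "G (2*pi) = L"
  proof -
    have "G (2*pi) = GG (2*\<alpha>) R (2*pi)" unfolding G_def using GG_sym[OF Rp a2p] .
    also have "\<dots> = GG (2*\<alpha>) (2*(R/2)) (2*pi)" by simp
    also have "\<dots> = pi / AGM \<alpha> (R/2)" by (rule GG_AGM) (use al Rp in auto)
    also have "\<dots> = L" using assms(4) unfolding L_of_def Rsq by simp
    finally show ?thesis .
  qed
  have Gpi: "G pi = L/2" using GG_4pi(2)[OF Rp a2p] GL unfolding G_def by simp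
  have \<psi>L: "\<psi> L = 2*pi" using G\<psi>[of L] GL Ginj by metis
  have \<psi>L2: "\<psi> (L/2) = pi" using G\<psi>[of "L/2"] Gpi Ginj by metis
  have F2pi: "F (2*pi) = R" "F pi = R" unfolding F_def FF_def using Rp by simp_all
  have xL: "x L = x0"
  proof -
    have "x L + y L = R" "x L - y L = r" using sF[of L] E[of L] \<psi>L F2pi by simp_all
    then show ?thesis unfolding R_def r_def by linarith
  qed
  have yL2: "y (L/2) = x0"
  proof -
    have "x (L/2) + y (L/2) = R" "x (L/2) - y (L/2) = - r" using sF[of "L/2"] E[of "L/2"] \<psi>L2 F2pi by simp_all
    then show ?thesis unfolding R_def r_def by linarith
  qed
  \<comment> \<open>the integrals of x^2 and y^2 as functions of the angle\<close>
  define XX where "XX u = (F u + r * cos u) / 2" for u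
  define YY where "YY u = (F u - r * cos u) / 2" for u
  have contF: "continuous_on UNIV F"
  proof -
    have "continuous_on UNIV (\<lambda>u. sqrt (R^2 * (cos u)^2 + (2*\<alpha>)^2 * (sin u)^2))"
      by (intro continuous_intros)
    then show ?thesis unfolding F_def FF_def[abs_def] .
  qed
  have Fnz: "F u \<noteq> 0" for u using Fp[of u] by simp
  have cA: "continuous_on UNIV (\<lambda>u. 2 * (XX u)^2 / F u)"
    unfolding XX_def using contF Fnz by (intro continuous_intros) auto
  have cB: "continuous_on UNIV (\<lambda>u. 2 * (YY u)^2 / F u)"
    unfolding YY_def using contF Fnz by (intro continuous_intros) auto
  obtain A where A0: "A 0 = 0" and dA: "\<And>u. (A has_real_derivative 2 * (XX u)^2 / F u) (at u)"
    using antideriv_exists[OF cA] by blast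
  obtain B where B0: "B 0 = 0" and dB: "\<And>u. (B has_real_derivative 2 * (YY u)^2 / F u) (at u)"
    using antideriv_exists[OF cB] by blast
  have XXx: "XX (\<psi> t) = x t" for t unfolding XX_def using sF[of t] E[of t] by simp
  have YYy: "YY (\<psi> t) = y t" for t unfolding YY_def using sF[of t] E[of t] by simp
  have ax: "a t * x t = A (\<psi> t)" for t
  proof -
    have d1: "((\<lambda>t. a t * x t) has_real_derivative 2 * (x t)^2) (at t)" for t
      by (rule DERIV_cong[OF DERIV_mult[OF da dx]]) (simp add: algebra_simps power2_eq_square)
    have d2: "((\<lambda>t. A (\<psi> t)) has_real_derivative 2 * (x t)^2) (at t)" for t
      using DERIV_chain2[OF dA d\<psi>[of t]] XXx[of t] sF[of t] Fnz[of "\<psi> t"] by simp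
    have "a t * x t - A (\<psi> t) = a 0 * x 0 - A (\<psi> 0)" using deriv_const_diff[OF d1 d2] by blast
    then show ?thesis using assms(17) \<psi>0 A0 by simp
  qed
  have bx: "b t * y t = B (\<psi> t)" for t
  proof -
    have d1: "((\<lambda>t. b t * y t) has_real_derivative 2 * (y t)^2) (at t)" for t
      by (rule DERIV_cong[OF DERIV_mult[OF db dy]]) (simp add: algebra_simps power2_eq_square)
    have d2: "((\<lambda>t. B (\<psi> t)) has_real_derivative 2 * (y t)^2) (at t)" for t
      using DERIV_chain2[OF dB d\<psi>[of t]] YYy[of t] sF[of t] Fnz[of "\<psi> t"] by simp
    have "b t * y t - B (\<psi> t) = b 0 * y 0 - B (\<psi> 0)" using deriv_const_diff[OF d1 d2] by blast
    then show ?thesis using assms(18) \<psi>0 B0 by simp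
  qed
  have ABpi: "A pi = B pi"
  proof -
    have d1: "((\<lambda>u. A u - B u) has_real_derivative 2 * r * cos u) (at u)" for u
    proof (rule DERIV_cong[OF DERIV_diff[OF dA dB]])
      show "2 * (XX u)^2 / F u - 2 * (YY u)^2 / F u = 2 * r * cos u"
        unfolding XX_def YY_def using Fnz[of u] by (simp add: field_simps power2_eq_square)
    qed
    have d2: "((\<lambda>u. 2 * r * sin u) has_real_derivative 2 * r * cos u) (at u)" for u
      by (auto intro!: derivative_eq_intros)
    have "(A pi - B pi) - 2 * r * sin pi = (A 0 - B 0) - 2 * r * sin 0" using deriv_const_diff[OF d1 d2] by blast
    then show ?thesis using A0 B0 by simp
  qed
  have A2pi: "A (2*pi) = 2 * B pi"
  proof -
    have Fs: "F (u + pi) = F u" for u unfolding F_def by (rule FF_shift)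
    have d1: "((\<lambda>u. A (u + pi)) has_real_derivative 2 * (YY u)^2 / F u) (at u)" for u
    proof -
      have "((\<lambda>u. u + pi) has_real_derivative 1) (at u)" by (auto intro!: derivative_eq_intros)
      from DERIV_chain2[OF dA this] show ?thesis unfolding XX_def YY_def by (simp add: Fs)
    qed
    have "A (pi + pi) - B pi = A (0 + pi) - B 0" using deriv_const_diff[OF d1 dB] by blast
    then show ?thesis using ABpi B0 by simp
  qed
  have "a L * x0 = 2 * (b (L/2) * x0)"
    using ax[of L] bx[of "L/2"] xL yL2 \<psi>L \<psi>L2 A2pi by simp
  then show ?thesis using x0p by simp
qed

end
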